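(* There is no real polynomial $p$ such that the restriction $p|_{[0,1]}$ satisfies $\Omega_{p|_{[0,1]}}=\{0,2,4\}$, whereas there exists a continuous function $f:[0,1]\to\mathbb{R}$ with $\Omega_f=\{0,2,4\}$.
   Context: $\mathbb{N}=\{0,1,2,\dots\}$. For $f:[0,1]\to\mathbb{R}$, $\Omega_f=\{n\in\mathbb{N}\cup\{\infty\} : \exists x\in\mathbb{R}\text{ with } |f^{-1}(x)|=n\}$, where $|f^{-1}(x)|$ is the cardinality of $\{t\in[0,1]: f(t)=x\}$ and $\infty$ stands for an infinite cardinality. *)

theory Defs
  imports "HOL-Analysis.Analysis" "HOL-Computational_Algebra.Polynomial" "HOL-Library.Extended_Nat"
begin

definition fibre_card :: "(real \<Rightarrow> real) \<Rightarrow> real \<Rightarrow> enat" where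
  "fibre_card f x = (if finite {t \<in> {0..1}. f t = x}
                      then enat (card {t \<in> {0..1}. f t = x}) else \<infinity>)"

definition Omega :: "(real \<Rightarrow> real) \<Rightarrow> enat set" where
  "Omega f = {n. \<exists>x::real. fibre_card f x = n}"

end

theory Submission
  imports Defs
begin

definition sb :: "real \<Rightarrow> real \<Rightarrow> real \<Rightarrow> nat" where
  "sb a b y = (if min a b < y \<and> y < max a b then 1 else 0)"

definition ind :: "bool \<Rightarrow> nat" where "ind P = (if P then 1 else 0)"

definition cnt :: "(nat \<Rightarrow> real) \<Rightarrow> nat \<Rightarrow> real \<Rightarrow> nat" where
  "cnt v n y = (\<Sum>i<n. sb (v i) (v (Suc i)) y) + (\<Sum>i\<le>n. ind (v i = y))"

lemma sb_ident:
  assumes "a \<noteq> b" "y < w" "w < y'"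
    and "a < y \<or> a = w \<or> y' < a" and "b < y \<or> b = w \<or> y' < b"
  shows "sb a b y + sb a b y' = 2 * sb a b w + ind (a = w) + ind (b = w)"
  using assms unfolding sb_def ind_def by (auto simp: min_def max_def)

lemma shift_ident:
  "(\<Sum>i<n. (ind (v i = w) + ind (v (Suc i) = w))) + (ind (v 0 = w) + ind (v n = w))
     = 2 * (\<Sum>i\<le>n. ind (v i = w))"
proof -
  have a: "(\<Sum>i\<le>n. ind (v i = w)) = (\<Sum>i<n. ind (v i = w)) + ind (v n = w)"
    by (simp add: lessThan_Suc_atMost[symmetric])
  have b: "(\<Sum>i\<le>n. ind (v i = w)) = ind (v 0 = w) + (\<Sum>i<n. ind (v (Suc i) = w))"
    by (rule sum.atMost_shift)
  show ?thesis using a b by (simp add: sum.distrib)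
qed

lemma mod4aux:
  assumes "(N::nat) + N' + e = 2*W" "even W" "even N" "even N'" "N' mod 4 = E' mod 4"
  shows "N mod 4 = (E' + e) mod 4"
proof -
  obtain a where a: "N = 2*a" using assms(3) by blast
  obtain c where c: "W = 2*c" using assms(2) by blast
  have d: "(4::int) dvd (int N' - int E')" using assms(5)
    by (metis mod_eq_dvd_iff of_nat_mod of_nat_numeral)
  have eq: "int N - (int E' + int e) = 4 * (int a - int c) + (int N' - int E')"
  proof -
    have "int N + int N' + int e = 2 * int W" using arg_cong[OF assms(1), of int] by simp
    moreover have "int N = 2 * int a" "int W = 2 * int c" using a c by simp_all
    ultimately show ?thesis by (simp add: algebra_simps)
  qed
  have "(4::int) dvd (int N - (int E' + int e))" unfolding eq using d by simp
  then have "int N mod 4 = (int E' + int e) mod 4" by (simp add: mod_eq_dvd_iff)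
  then show ?thesis by (metis of_nat_add of_nat_eq_iff of_nat_mod of_nat_numeral)
qed

lemma comb:
  fixes v :: "nat \<Rightarrow> real"
  assumes neq: "\<forall>i<n. v i \<noteq> v (Suc i)"
    and ev: "\<forall>y. even (cnt v n y)"
  shows False
proof -
  define Lv where "Lv = v ` {..n}"
  have finL: "finite Lv" unfolding Lv_def by simp
  have v0L: "v 0 \<in> Lv" "v n \<in> Lv" unfolding Lv_def by auto
  define E where "E y = ind (y < v 0) + (ind (y < v n))" for y
  have noabove: "cnt v n y = 0" if "\<forall>u\<in>Lv. u < y" for y
  proof -
    have "\<forall>i<n. sb (v i) (v (Suc i)) y = 0"
    proof (intro allI impI)
      fix i assume "i < n"
      then have "v i < y" "v (Suc i) < y" using that unfolding Lv_def by auto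
      then show "sb (v i) (v (Suc i)) y = 0" unfolding sb_def by auto
    qed
    moreover have "\<forall>i\<le>n. v i \<noteq> y" using that unfolding Lv_def by fastforce
    ultimately show ?thesis unfolding cnt_def by (simp add: ind_def)
  qed
  have main: "\<forall>y. y \<notin> Lv \<longrightarrow> card {u\<in>Lv. y < u} = m \<longrightarrow> cnt v n y mod 4 = E y mod 4" for m
  proof (induction m)
    case 0
    show ?case
    proof (intro allI impI)
      fix y assume y: "y \<notin> Lv" "card {u\<in>Lv. y < u} = 0"
      then have "{u\<in>Lv. y < u} = {}" using finL by simp
      then have "\<forall>u\<in>Lv. u < y" using y by (metis (mono_tags, lifting) empty_iff linorder_neqE_linordered_idom mem_Collect_eq)
      then have "cnt v n y = 0" by (rule noabove)
      moreover have "E y = 0" using \<open>\<forall>u\<in>Lv. u < y\<close> v0L unfolding E_def ind_def by fastforce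
      ultimately show "cnt v n y mod 4 = E y mod 4" by simp
    qed
  next
    case (Suc m)
    show ?case
    proof (intro allI impI)
      fix y assume y: "y \<notin> Lv" "card {u\<in>Lv. y < u} = Suc m"
      define A where "A = {u\<in>Lv. y < u}"
      have finA: "finite A" using finL unfolding A_def by simp
      have neA: "A \<noteq> {}" using y(2) unfolding A_def by (metis card.empty nat.distinct(1))
      define w where "w = Min A"
      have wA: "w \<in> A" unfolding w_def using finA neA by simp
      have wmin: "\<And>u. u \<in> A \<Longrightarrow> w \<le> u" unfolding w_def using finA by simp
      define B where "B = {u\<in>Lv. w < u}"
      have finB: "finite B" using finL unfolding B_def by simp
      define y' where "y' = (if B = {} then w + 1 else (w + Min B) / 2)"
      have wy': "w < y'"
      proof (cases "B = {}")
        case False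
        then have "Min B \<in> B" using finB by simp
        then show ?thesis unfolding y'_def B_def using False by auto
      qed (simp add: y'_def)
      have gap': "\<And>u. u \<in> Lv \<Longrightarrow> w < u \<Longrightarrow> y' < u"
      proof -
        fix u assume u: "u \<in> Lv" "w < u"
        then have uB: "u \<in> B" unfolding B_def by simp
        then have "B \<noteq> {}" by auto
        moreover have "Min B \<le> u" using uB finB by simp
        moreover have "w < Min B" using \<open>B \<noteq> {}\<close> finB Min_in[OF finB] unfolding B_def by auto
        ultimately show "y' < u" unfolding y'_def by auto
      qed
      have yw: "y < w" using wA unfolding A_def by simp
      have classify: "\<And>u. u \<in> Lv \<Longrightarrow> u < y \<or> u = w \<or> y' < u"
      proof -
        fix u assume u: "u \<in> Lv"
        show "u < y \<or> u = w \<or> y' < u"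
        proof (cases "y < u")
          case True
          then have "w \<le> u" using wmin u unfolding A_def by simp
          then show ?thesis using gap' u by force
        next
          case False
          then show ?thesis using y u by (cases "u = y") auto
        qed
      qed
      have y'L: "y' \<notin> Lv" using classify wy' yw by force
      have Aeq: "{u\<in>Lv. y' < u} = A - {w}"
        using classify wy' yw gap' unfolding A_def by force
      have cardy': "card {u\<in>Lv. y' < u} = m"
        using Aeq wA finA y(2) unfolding A_def by simp
      have IH: "cnt v n y' mod 4 = E y' mod 4" using Suc.IH y'L cardy' by blast
      have vL: "\<And>i. i \<le> n \<Longrightarrow> v i \<in> Lv" unfolding Lv_def by simp
      have seg: "\<forall>i<n. sb (v i) (v (Suc i)) y + sb (v i) (v (Suc i)) y'
          = 2 * sb (v i) (v (Suc i)) w + ind (v i = w) + ind (v (Suc i) = w)"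
        using neq classify vL yw wy' by (intro allI impI sb_ident) auto
      have ny: "\<forall>i\<le>n. v i \<noteq> y \<and> v i \<noteq> y'" using vL y(1) y'L by metis
      have ident: "cnt v n y + cnt v n y' + (ind (v 0 = w) + ind (v n = w)) = 2 * cnt v n w"
      proof -
        have "cnt v n y + cnt v n y' = (\<Sum>i<n. sb (v i) (v (Suc i)) y + sb (v i) (v (Suc i)) y')"
          using ny unfolding cnt_def by (simp add: sum.distrib ind_def)
        also have "\<dots> = (\<Sum>i<n. 2 * sb (v i) (v (Suc i)) w + (ind (v i = w) + ind (v (Suc i) = w)))"
          using seg by (intro sum.cong) auto
        also have "\<dots> = 2 * (\<Sum>i<n. sb (v i) (v (Suc i)) w) + (\<Sum>i<n. (ind (v i = w) + ind (v (Suc i) = w)))"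
          by (simp add: sum.distrib sum_distrib_left)
        finally show ?thesis using shift_ident[where n=n and v=v and w=w] unfolding cnt_def by simp
      qed
      have Eeq: "E y = E y' + (ind (v 0 = w) + ind (v n = w))"
      proof -
        have "v 0 < y \<or> v 0 = w \<or> y' < v 0" "v n < y \<or> v n = w \<or> y' < v n"
          using classify vL by auto
        then show ?thesis unfolding E_def ind_def using yw wy' by auto
      qed
      have e1: "even (cnt v n y)" "even (cnt v n y')" "even (cnt v n w)" using ev by auto
      show "cnt v n y mod 4 = E y mod 4"
        unfolding Eeq using mod4aux[OF ident _ e1(1) e1(2) IH] e1(3) by simp
    qed
  qed
  define y0 where "y0 = Min Lv - 1"
  have neL: "Lv \<noteq> {}" unfolding Lv_def by auto
  have y0: "\<forall>u\<in>Lv. y0 < u"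
  proof
    fix u assume "u \<in> Lv"
    then have "Min Lv \<le> u" using finL by simp
    then show "y0 < u" unfolding y0_def by simp
  qed
  have "y0 \<notin> Lv" using y0 by auto
  then have "cnt v n y0 mod 4 = E y0 mod 4" using main by blast
  moreover have "E y0 = 2" using y0 v0L unfolding E_def ind_def by fastforce
  moreover have "cnt v n y0 = 2 * cnt v n y0 - cnt v n y0" by simp
  moreover have "cnt v n y0 = 0"
  proof -
    have "\<forall>i<n. sb (v i) (v (Suc i)) y0 = 0"
    proof (intro allI impI)
      fix i assume "i < n"
      then have "y0 < v i" "y0 < v (Suc i)" using y0 unfolding Lv_def by auto
      then show "sb (v i) (v (Suc i)) y0 = 0" unfolding sb_def by auto
    qed
    moreover have "\<forall>i\<le>n. v i \<noteq> y0" using y0 unfolding Lv_def by fastforce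
    ultimately show ?thesis unfolding cnt_def by (simp add: ind_def)
  qed
  ultimately show False by simp
qed


lemma cover:
  fixes t :: "nat \<Rightarrow> real"
  shows "t 0 < x \<Longrightarrow> x < t n \<Longrightarrow> (\<forall>i\<le>n. t i \<noteq> x) \<Longrightarrow> \<exists>i<n. t i < x \<and> x < t (Suc i)"
proof (induction n)
  case 0 then show ?case by simp
next
  case (Suc n)
  show ?case
  proof (cases "x < t n")
    case True
    then obtain i where "i < n" "t i < x \<and> x < t (Suc i)" using Suc by auto
    then show ?thesis by (intro exI[of _ i]) auto
  next
    case False
    moreover have "t n \<noteq> x" using Suc.prems(3) by simp
    ultimately have "t n < x" by simp
    then show ?thesis using Suc.prems(2) by (intro exI[of _ n]) auto
  qed
qed

lemma poly_fibres:
  fixes p :: "real poly"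
  assumes dp: "pderiv p \<noteq> 0"
  shows "\<exists>n v. (\<forall>i<n. v i \<noteq> v (Suc i)) \<and>
     (\<forall>y. finite {x\<in>{0..1}. poly p x = y} \<and> card {x\<in>{0..1}. poly p x = y} = cnt v n y)"
proof -
  define S where "S = {0,1} \<union> {x. 0 < x \<and> x < 1 \<and> poly (pderiv p) x = 0}"
  have "{x. 0 < x \<and> x < 1 \<and> poly (pderiv p) x = 0} \<subseteq> {x. poly (pderiv p) x = 0}" by auto
  then have finS: "finite S" using poly_roots_finite[OF dp] unfolding S_def
    by (auto intro: finite_subset)
  define L where "L = sorted_list_of_set S"
  define n where "n = length L - 1"
  define t where "t i = L ! i" for i
  have setL: "set L = S" using finS by (simp add: L_def)
  have strictL: "sorted_wrt (<) L" unfolding L_def by simp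
  have "card {0,1::real} = 2" by simp
  moreover have "{0,1} \<subseteq> S" unfolding S_def by auto
  ultimately have "card S \<ge> 2" using finS by (metis card_mono)
  then have lenL: "length L = Suc n" "n \<ge> 1" unfolding n_def L_def by auto
  have tlt: "\<And>i j. i < j \<Longrightarrow> j \<le> n \<Longrightarrow> t i < t j"
    unfolding t_def using strictL lenL by (auto intro: sorted_wrt_nth_less)
  have tle: "\<And>i j. i \<le> j \<Longrightarrow> j \<le> n \<Longrightarrow> t i \<le> t j"
    using tlt by (metis le_less)
  have tS: "\<And>i. i \<le> n \<Longrightarrow> t i \<in> S" unfolding t_def using setL lenL
    by (metis in_set_conv_nth le_imp_less_Suc)
  have Sex: "\<And>s. s \<in> S \<Longrightarrow> \<exists>i\<le>n. t i = s" unfolding t_def using setL lenL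
    by (metis in_set_conv_nth less_Suc_eq_le)
  have S01: "\<And>s. s \<in> S \<Longrightarrow> 0 \<le> s \<and> s \<le> 1" unfolding S_def by auto
  have t01: "\<And>i. i \<le> n \<Longrightarrow> 0 \<le> t i \<and> t i \<le> 1" using tS S01 by blast
  have t0: "t 0 = 0"
  proof -
    obtain j where "j \<le> n" "t j = 0" using Sex[of 0] unfolding S_def by auto
    then show ?thesis using tle[of 0 j] t01[of 0] by auto
  qed
  have tn: "t n = 1"
  proof -
    obtain j where "j \<le> n" "t j = 1" using Sex[of 1] unfolding S_def by auto
    then show ?thesis using tle[of j n] t01[of n] by auto
  qed
  have tinj: "inj_on t {..n}"
    by (intro inj_onI) (metis atMost_iff linorder_neqE_nat tlt order.irrefl)
  have gapS: "\<And>i x. i < n \<Longrightarrow> t i < x \<Longrightarrow> x < t (Suc i) \<Longrightarrow> x \<notin> S"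
  proof
    fix i x assume i: "i < n" "t i < x" "x < t (Suc i)" "x \<in> S"
    then obtain j where j: "j \<le> n" "t j = x" using Sex by blast
    have "i < j" using i j tle by (metis not_le order.strict_trans1 less_imp_le)
    moreover have "j < Suc i" using i j tle by (metis Suc_leI not_le order.strict_trans2 less_imp_le)
    ultimately show False by simp
  qed
  have nz: "\<And>i x. i < n \<Longrightarrow> t i < x \<Longrightarrow> x < t (Suc i) \<Longrightarrow> poly (pderiv p) x \<noteq> 0"
  proof
    fix i x assume i: "i < n" "t i < x" "x < t (Suc i)" "poly (pderiv p) x = 0"
    have "0 < x" "x < 1" using i t01[of i] t01[of "Suc i"] by auto
    then have "x \<in> S" using i unfolding S_def by auto
    then show False using gapS i by blast
  qed
  have injp: "inj_on (poly p) {t i..t (Suc i)}" if i: "i < n" for i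
  proof (rule inj_onI, rule ccontr)
    fix a b assume ab: "a \<in> {t i..t (Suc i)}" "b \<in> {t i..t (Suc i)}" "poly p a = poly p b" "a \<noteq> b"
    have "\<exists>z. min a b < z \<and> z < max a b \<and> DERIV (poly p) z :> 0"
      using ab by (intro Rolle) (auto simp: min_def max_def continuous_on_poly
          intro: continuous_on_poly real_differentiable_def[THEN iffD2] exI[of _ "poly (pderiv p) _"])
    then obtain z where z: "min a b < z" "z < max a b" "DERIV (poly p) z :> 0" by blast
    have "poly (pderiv p) z = 0" using DERIV_unique[OF poly_DERIV z(3)] .
    moreover have "t i < z" "z < t (Suc i)" using z ab by auto
    ultimately show False using nz i by blast
  qed
  define v where "v i = poly p (t i)" for i
  have vneq: "\<forall>i<n. v i \<noteq> v (Suc i)"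
  proof (intro allI impI)
    fix i assume i: "i < n"
    have "t i < t (Suc i)" using tlt i by simp
    then show "v i \<noteq> v (Suc i)" using injp[OF i] unfolding v_def inj_on_def
      by (metis atLeastAtMost_iff order.refl less_imp_le order.irrefl)
  qed
  have fib: "finite {x\<in>{0..1}. poly p x = y} \<and> card {x\<in>{0..1}. poly p x = y} = cnt v n y" for y
  proof -
    define G where "G i = {x. t i < x \<and> x < t (Suc i) \<and> poly p x = y}" for i
    define I where "I = {i. i \<le> n \<and> v i = y}"
    have Geq: "card (G i) = sb (v i) (v (Suc i)) y \<and> finite (G i)" if i: "i < n" for i
    proof (cases "min (v i) (v (Suc i)) < y \<and> y < max (v i) (v (Suc i))")
      case True
      have ti: "t i < t (Suc i)" using tlt i by simp
      have cont: "continuous_on {t i..t (Suc i)} (poly p)" by (intro continuous_on_poly continuous_on_id)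
      obtain x where x: "t i \<le> x" "x \<le> t (Suc i)" "poly p x = y"
      proof (cases "v i < v (Suc i)")
        case True
        then have "v i < y" "y < v (Suc i)" using \<open>min _ _ < y \<and> _\<close> by (auto simp: min_def max_def)
        then show ?thesis using IVT'[of "poly p" "t i" y "t (Suc i)", OF _ _ _ cont] ti that
          unfolding v_def by auto
      next
        case False
        then have "v (Suc i) < y" "y < v i" using \<open>min _ _ < y \<and> _\<close> by (auto simp: min_def max_def split: if_splits)
        then show ?thesis using IVT2'[of "poly p" "t (Suc i)" y "t i", OF _ _ _ cont] ti that
          unfolding v_def by auto
      qed
      have "x \<noteq> t i" "x \<noteq> t (Suc i)" using x True unfolding v_def by auto
      then have xG: "x \<in> G i" using x unfolding G_def by auto
      have "G i = {x}"
      proof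
        show "G i \<subseteq> {x}"
        proof
          fix z assume "z \<in> G i"
          then have "z \<in> {t i..t (Suc i)}" "poly p z = poly p x" using x unfolding G_def by auto
          then show "z \<in> {x}" using injp[OF i] x unfolding inj_on_def by auto
        qed
      qed (use xG in auto)
      then show ?thesis using True unfolding sb_def by simp
    next
      case False
      have "G i = {}"
      proof (rule ccontr)
        assume "G i \<noteq> {}"
        then obtain x where x: "t i < x" "x < t (Suc i)" "poly p x = y" unfolding G_def by auto
        have "(poly p (t i) < poly p x \<and> poly p x < poly p (t (Suc i))) \<or>
              (poly p (t (Suc i)) < poly p x \<and> poly p x < poly p (t i))"
          by (rule continuous_inj_imp_mono[OF x(1,2) _ injp[OF i]])
             (intro continuous_on_poly continuous_on_id)
        then show False using False x unfolding v_def by (auto simp: min_def max_def)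
      qed
      then show ?thesis using False unfolding sb_def by simp
    qed
    have Feq: "{x\<in>{0..1}. poly p x = y} = t ` I \<union> (\<Union>i\<in>{..<n}. G i)"
    proof
      show "{x\<in>{0..1}. poly p x = y} \<subseteq> t ` I \<union> (\<Union>i\<in>{..<n}. G i)"
      proof
        fix x assume x: "x \<in> {x\<in>{0..1}. poly p x = y}"
        show "x \<in> t ` I \<union> (\<Union>i\<in>{..<n}. G i)"
        proof (cases "x \<in> S")
          case True
          then obtain i where "i \<le> n" "t i = x" using Sex by blast
          then show ?thesis using x unfolding I_def v_def by auto
        next
          case False
          then have "x \<noteq> 0" "x \<noteq> 1" unfolding S_def by auto
          then have "t 0 < x" "x < t n" using x t0 tn by auto
          moreover have "\<forall>i\<le>n. t i \<noteq> x" using tS False by blast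
          ultimately obtain i where "i < n" "t i < x" "x < t (Suc i)" using cover[of t x n] by blast
          then show ?thesis using x unfolding G_def by auto
        qed
      qed
    next
      show "t ` I \<union> (\<Union>i\<in>{..<n}. G i) \<subseteq> {x\<in>{0..1}. poly p x = y}"
      proof
        fix x assume "x \<in> t ` I \<union> (\<Union>i\<in>{..<n}. G i)"
        then show "x \<in> {x\<in>{0..1}. poly p x = y}"
        proof
          assume "x \<in> t ` I"
          then show ?thesis using t01 unfolding I_def v_def by auto
        next
          assume "x \<in> (\<Union>i\<in>{..<n}. G i)"
          then obtain i where "i < n" "t i < x" "x < t (Suc i)" "poly p x = y" unfolding G_def by auto
          then show ?thesis using t01[of i] t01[of "Suc i"] by auto
        qed
      qed
    qed
    have finI: "finite I" unfolding I_def by simp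
    have finG: "finite (\<Union>i\<in>{..<n}. G i)" using Geq by auto
    have disj: "t ` I \<inter> (\<Union>i\<in>{..<n}. G i) = {}"
    proof -
      have "t j \<notin> G i" if "j \<le> n" "i < n" for i j
        using gapS[of i "t j"] tS[of j] that unfolding G_def by auto
      then show ?thesis unfolding I_def by auto
    qed
    have cardI: "card (t ` I) = (\<Sum>i\<le>n. ind (v i = y))"
    proof -
      have "card (t ` I) = card I" using tinj unfolding I_def by (intro card_image) (auto intro: inj_on_subset)
      also have "\<dots> = (\<Sum>i\<le>n. ind (v i = y))"
        unfolding I_def ind_def by (simp add: of_bool_def[symmetric] Int_def conj_commute)
      finally show ?thesis .
    qed
    have disjG: "\<forall>i\<in>{..<n}. \<forall>j\<in>{..<n}. i \<noteq> j \<longrightarrow> G i \<inter> G j = {}"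
    proof (intro ballI impI)
      fix i j assume ij: "i \<in> {..<n}" "j \<in> {..<n}" "i \<noteq> j"
      show "G i \<inter> G j = {}"
      proof (cases "i < j")
        case True
        then have "t (Suc i) \<le> t j" using tle ij by auto
        then show ?thesis unfolding G_def by auto
      next
        case False
        then have "t (Suc j) \<le> t i" using tle ij by auto
        then show ?thesis unfolding G_def by auto
      qed
    qed
    have cardG: "card (\<Union>i\<in>{..<n}. G i) = (\<Sum>i<n. sb (v i) (v (Suc i)) y)"
      using card_UN_disjoint[of "{..<n}" G] disjG Geq by simp
    show ?thesis
      unfolding Feq using finI finG disj cardI cardG
      by (simp add: card_Un_disjoint cnt_def)
  qed
  show ?thesis using vneq fib by blast
qed
lemma fc_in: "fibre_card f y \<in> Omega f" unfolding Omega_def by auto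

lemma no_poly: "\<not> (\<exists>p :: real poly. Omega (poly p) = {0, 2, 4})"
proof
  assume "\<exists>p :: real poly. Omega (poly p) = {0, 2, 4}"
  then obtain p :: "real poly" where hp: "Omega (poly p) = {0, 2, 4}" by blast
  have hyp: "fibre_card (poly p) y \<in> {0,2,4}" for y using fc_in[of "poly p" y] hp by simp
  show False
  proof (cases "pderiv p = 0")
    case True
    then obtain a where a: "p = [:a:]" using pderiv_eq_0_iff degree0_coeffs by blast
    have "{t \<in> {0..1}. poly p t = a} = {0..1::real}" using a by auto
    then have "fibre_card (poly p) a = \<infinity>" unfolding fibre_card_def by simp
    then show False using hyp[of a] by simp
  next
    case False
    then obtain n v where nv: "\<forall>i<n. v i \<noteq> v (Suc i)"
      "\<forall>y. finite {x\<in>{0..1}. poly p x = y} \<and> card {x\<in>{0..1}. poly p x = y} = cnt v n y"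
      using poly_fibres by blast
    have "even (cnt v n y)" for y
    proof -
      have "enat (cnt v n y) \<in> {0,2,4}" using hyp[of y] nv(2) unfolding fibre_card_def by metis
      then have "cnt v n y \<in> {0,2,4}" by (auto simp: zero_enat_def numeral_eq_enat)
      then show ?thesis by auto
    qed
    then show False using comb[OF nv(1)] by blast
  qed
qed

definition phi :: "real \<Rightarrow> real" where
  "phi t = (if t \<le> 3/8 then 1 - 2*t else 6*t - 2)"
definition kk :: "real \<Rightarrow> nat" where
  "kk t = (LEAST k. t * 2^k > 1/4)"
definition gg :: "real \<Rightarrow> real" where
  "gg t = phi (t * 2^kk t) / 2^kk t"
definition ff :: "real \<Rightarrow> real" where
  "ff t = (if t \<le> 0 then 0 else if t \<le> 1/2 then gg t else if t \<le> 5/8 then 3 - 4*t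
           else if t \<le> 3/4 then 4*t - 2 else 4 - 4*t)"

lemma kk_ex: "0 < t \<Longrightarrow> \<exists>k. t * 2^k > (1/4::real)"
proof -
  assume t: "0 < t"
  obtain k where "1/(4*t) < (2::real)^k" using real_arch_pow[of 2 "1/(4*t)"] by auto
  then have "1/4 < t * 2^k" using t by (simp add: field_simps)
  then show ?thesis by blast
qed

lemma kk_prop:
  assumes "0 < t" "t \<le> 1/2"
  shows "1/4 < t * 2^kk t \<and> t * 2^kk t \<le> 1/2"
proof
  show "1/4 < t * 2^kk t" unfolding kk_def using LeastI_ex[OF kk_ex[OF assms(1)]] .
  show "t * 2^kk t \<le> 1/2"
  proof (cases "kk t")
    case 0 then show ?thesis using assms by simp
  next
    case (Suc m)
    then have "m < kk t" by simp
    then have "\<not> (t * 2^m > 1/4)" unfolding kk_def by (rule not_less_Least)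
    then show ?thesis using Suc by simp
  qed
qed

lemma kk_base: "1/4 < t \<Longrightarrow> kk t = 0"
  unfolding kk_def by simp

lemma kk_half:
  assumes "0 < t" "t \<le> 1/2"
  shows "kk (t/2) = Suc (kk t)"
proof -
  obtain k where k: "t * 2^k > 1/4" using kk_ex[OF assms(1)] by blast
  have "(LEAST k. t/2 * 2^k > (1/4::real)) = Suc (LEAST m. t/2 * 2^(Suc m) > (1/4::real))"
    by (rule Least_Suc[of _ "Suc k"]) (use k assms in auto)
  then show ?thesis unfolding kk_def by simp
qed

lemma gg_base: "1/4 < t \<Longrightarrow> gg t = phi t"
  unfolding gg_def using kk_base by simp

lemma gg_half:
  assumes "0 < t" "t \<le> 1/2"
  shows "gg (t/2) = gg t / 2"
  unfolding gg_def using kk_half[OF assms] by simp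

lemma gg_bounds:
  assumes "0 < t" "t \<le> 1/2"
  shows "0 < gg t \<and> gg t \<le> 1 \<and> gg t \<le> 4*t"
proof -
  define u where "u = t * 2^kk t"
  have u: "1/4 < u" "u \<le> 1/2" using kk_prop[OF assms] unfolding u_def by auto
  have ph: "1/4 \<le> phi u" "phi u \<le> 1" using u unfolding phi_def by auto
  have p: "(1::real) \<le> 2^kk t" by simp
  have g: "gg t = phi u / 2^kk t" unfolding gg_def u_def by simp
  have "phi u / 2^kk t \<le> 1 / 2^kk t" using ph by (simp add: divide_right_mono)
  also have "1 / 2^kk t < 4 * t" using u unfolding u_def by (simp add: field_simps)
  finally have a: "gg t \<le> 4*t" using g by simp
  have "phi u \<le> 2^kk t" using ph(2) p by linarith
  then have b: "phi u / 2^kk t \<le> 1" by simp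
  have c: "0 < phi u / 2^kk t" using ph by simp
  show ?thesis using a b c g by simp
qed

lemma ff_tail: "0 < t \<Longrightarrow> t \<le> 1/2 \<Longrightarrow> ff t = gg t"
  unfolding ff_def by simp

lemma ff_half: "0 < t \<Longrightarrow> t \<le> 1/4 \<Longrightarrow> ff t = ff (2*t) / 2"
  using gg_half[of "2*t"] by (simp add: ff_tail)

lemma ff_quarter: "ff (1/4) = 1/2"
  using ff_half[of "1/4"] by (simp add: ff_def gg_base phi_def)

lemma glue:
  fixes f :: "real \<Rightarrow> real"
  assumes "continuous_on {a..b} f" "continuous_on {b..c} f" "a \<le> b" "b \<le> c"
  shows "continuous_on {a..c} f"
proof -
  have "{a..c} = {a..b} \<union> {b..c}" using assms(3,4) by auto
  then show ?thesis using continuous_on_closed_Un[OF _ _ assms(1,2)] by simp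
qed

lemma cont_quarter: "continuous_on {1/4..1} ff"
proof -
  have p1: "continuous_on {1/4..3/8} ff"
  proof (rule continuous_on_eq[of _ "\<lambda>x. 1 - 2*x"])
    show "continuous_on {1/4..3/8} (\<lambda>x::real. 1 - 2*x)" by (intro continuous_intros)
    fix x :: real assume x: "x \<in> {1/4..3/8}"
    show "1 - 2*x = ff x"
    proof (cases "x = 1/4")
      case True then show ?thesis unfolding True using ff_quarter by simp
    next
      case False then show ?thesis using x by (simp add: ff_tail gg_base phi_def)
    qed
  qed
  have p2: "continuous_on {3/8..1/2} ff"
  proof (rule continuous_on_eq[of _ "\<lambda>x. 6*x - 2"])
    show "continuous_on {3/8..1/2} (\<lambda>x::real. 6*x - 2)" by (intro continuous_intros)
    fix x :: real assume x: "x \<in> {3/8..1/2}"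
    show "6*x - 2 = ff x" using x by (auto simp: ff_tail gg_base phi_def)
  qed
  have p3: "continuous_on {1/2..5/8} ff"
  proof (rule continuous_on_eq[of _ "\<lambda>x. 3 - 4*x"])
    show "continuous_on {1/2..5/8} (\<lambda>x::real. 3 - 4*x)" by (intro continuous_intros)
    fix x :: real assume x: "x \<in> {1/2..5/8}"
    show "3 - 4*x = ff x"
    proof (cases "x = 1/2")
      case True then show ?thesis by (simp add: ff_tail gg_base phi_def)
    next
      case False then show ?thesis using x by (simp add: ff_def)
    qed
  qed
  have p4: "continuous_on {5/8..3/4} ff"
  proof (rule continuous_on_eq[of _ "\<lambda>x. 4*x - 2"])
    show "continuous_on {5/8..3/4} (\<lambda>x::real. 4*x - 2)" by (intro continuous_intros)
    fix x :: real assume x: "x \<in> {5/8..3/4}"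
    show "4*x - 2 = ff x" using x by (auto simp: ff_def)
  qed
  have p5: "continuous_on {3/4..1} ff"
  proof (rule continuous_on_eq[of _ "\<lambda>x. 4 - 4*x"])
    show "continuous_on {3/4..1} (\<lambda>x::real. 4 - 4*x)" by (intro continuous_intros)
    fix x :: real assume x: "x \<in> {3/4..1}"
    show "4 - 4*x = ff x" using x by (auto simp: ff_def)
  qed
  have "continuous_on {1/4..1/2} ff" by (rule glue[OF p1 p2]) auto
  then have "continuous_on {1/4..5/8} ff" by (rule glue[OF _ p3]) auto
  then have "continuous_on {1/4..3/4} ff" by (rule glue[OF _ p4]) auto
  then show ?thesis by (rule glue[OF _ p5]) auto
qed

lemma cont_n: "continuous_on {(1/2)^(n+2)..1} ff"
proof (induction n)
  case 0 then show ?case using cont_quarter by (simp add: power2_eq_square)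
next
  case (Suc n)
  define a :: real where "a = (1/2)^(n+3)"
  define b :: real where "b = (1/2)^(n+2)"
  have b4: "b \<le> 1/4"
  proof -
    have "(1/2::real)^(n+2) \<le> (1/2)^2" by (rule power_decreasing) auto
    then show ?thesis unfolding b_def by (simp add: power2_eq_square)
  qed
  have a0: "0 < a" unfolding a_def by simp
  have ab2: "2*a = b" unfolding a_def b_def by (simp add: power_add eval_nat_numeral)
  have ab: "0 < a" "a \<le> b" "b \<le> 1/4" "2*a = b" "b \<le> 1" using a0 ab2 b4 by auto
  have c1: "continuous_on {a..b} (\<lambda>x. ff (2*x) / 2)"
  proof -
    have "continuous_on {a..b} (\<lambda>x. ff (2*x))"
    proof (rule continuous_on_compose2[of "{b..1}" ff])
      show "continuous_on {b..1} ff" using Suc.IH unfolding b_def .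
      show "continuous_on {a..b} (\<lambda>x::real. 2*x)" by (intro continuous_intros)
      show "(\<lambda>x. 2*x) ` {a..b} \<subseteq> {b..1}" using ab b4 by auto
    qed
    then show ?thesis by (intro continuous_intros) auto
  qed
  have c2: "continuous_on {a..b} ff"
    by (rule continuous_on_eq[OF c1]) (use ab b4 ff_half in auto)
  have "continuous_on {a..1} ff" by (rule glue[OF c2 Suc.IH[folded b_def]]) (use ab in auto)
  moreover have e: "Suc n + 2 = n + 3" by simp
  ultimately show ?case unfolding e a_def[symmetric] by simp
qed

lemma ff_bound: "0 \<le> t \<Longrightarrow> t \<le> 1 \<Longrightarrow> \<bar>ff t\<bar> \<le> 4 * t"
proof -
  assume t: "0 \<le> t" "t \<le> 1"
  show ?thesis
  proof (cases "t = 0")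
    case True then show ?thesis by (simp add: ff_def)
  next
    case False
    show ?thesis
    proof (cases "t \<le> 1/2")
      case True then show ?thesis using gg_bounds[of t] ff_tail[of t] t False by auto
    next
      case False then show ?thesis using t unfolding ff_def by auto
    qed
  qed
qed

lemma cont_ff: "continuous_on {0..1} ff"
  unfolding continuous_on_eq_continuous_within
proof
  fix x :: real assume x: "x \<in> {0..1}"
  show "continuous (at x within {0..1}) ff"
  proof (cases "x = 0")
    case True
    have ev: "eventually (\<lambda>t. norm (ff t) \<le> 4 * \<bar>t\<bar>) (at 0 within {0..1})"
      unfolding eventually_at_filter using ff_bound by (intro always_eventually) auto
    have "((\<lambda>t. 4 * \<bar>t\<bar>) \<longlongrightarrow> 4 * \<bar>0\<bar>) (at (0::real) within {0..1})"
      by (intro tendsto_intros)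
    then have "((\<lambda>t. 4 * \<bar>t\<bar>) \<longlongrightarrow> 0) (at (0::real) within {0..1})" by simp
    then have "(ff \<longlongrightarrow> 0) (at 0 within {0..1})" by (rule Lim_null_comparison[OF ev])
    then show ?thesis using True unfolding continuous_within by (simp add: ff_def)
  next
    case False
    then have x0: "0 < x" using x by simp
    obtain m where m: "(1/2::real)^m < x" using real_arch_pow_inv[OF x0, of "1/2"] by auto
    define a :: real where "a = (1/2)^(m+2)"
    have "a \<le> (1/2)^m" unfolding a_def by (rule power_decreasing) auto
    then have ax: "a < x" using m by simp
    have a0: "0 < a" unfolding a_def by simp
    have "continuous (at x within {a..1}) ff"
      using cont_n[of m] x ax unfolding a_def[symmetric] continuous_on_eq_continuous_within by auto
    moreover have "at x within {0..1} = at x within {a..1}"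
      by (rule at_within_nhd[of _ "{a<..}"]) (use ax a0 in auto)
    ultimately show ?thesis by simp
  qed
qed

definition TT :: "real \<Rightarrow> real set" where "TT y = {t. 0 < t \<and> t \<le> 1/2 \<and> ff t = y}"
definition BB :: "real \<Rightarrow> real set" where "BB y = {t. 1/4 < t \<and> t \<le> 1/2 \<and> phi t = y}"
definition FR :: "real \<Rightarrow> real set" where "FR y = {t. 1/2 < t \<and> t \<le> 1 \<and> ff t = y}"

definition tc :: "real \<Rightarrow> nat" where
  "tc y = (if y \<le> 0 \<or> y > 1 then 0 else if y > 1/2 then 1 else if y = 1/2 then 2 else 3)"
definition bc :: "real \<Rightarrow> nat" where
  "bc y = (if 1/2 \<le> y \<and> y \<le> 1 then 1 else if 1/4 < y \<and> y < 1/2 then 2 else if y = 1/4 then 1 else 0)"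
definition fc :: "real \<Rightarrow> nat" where
  "fc y = (if 0 \<le> y \<and> y < 1/2 then 1 else if y = 1/2 then 2 else if 1/2 < y \<and> y < 1 then 3
           else if y = 1 then 1 else 0)"

lemma BB_card: "finite (BB y) \<and> card (BB y) = bc y"
proof -
  consider "1/2 < y \<and> y \<le> 1" | "y = 1/2" | "1/4 < y \<and> y < 1/2" | "y = 1/4"
    | "y < 1/4 \<or> y > 1" by linarith
  then show ?thesis
  proof cases
    case 1
    then have "BB y = {(y+2)/6}" unfolding BB_def phi_def
      by (intro set_eqI) (auto simp: field_simps split: if_splits)
    then show ?thesis using 1 by (simp add: bc_def)
  next
    case 2
    then have "BB y = {5/12}" unfolding BB_def phi_def
      by (intro set_eqI) (auto simp: field_simps split: if_splits)
    then show ?thesis unfolding 2 by (simp add: bc_def)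
  next
    case 3
    then have "BB y = {(y+2)/6, (1-y)/2}" unfolding BB_def phi_def
      by (intro set_eqI) (auto simp: field_simps split: if_splits)
    moreover have "(y+2)/6 \<noteq> (1-y)/2" using 3 by (simp add: field_simps)
    ultimately show ?thesis using 3 by (simp add: bc_def)
  next
    case 4
    then have "BB y = {3/8}" unfolding BB_def phi_def
      by (intro set_eqI) (auto simp: field_simps split: if_splits)
    then show ?thesis unfolding 4 by (simp add: bc_def)
  next
    case 5
    then have "BB y = {}" unfolding BB_def phi_def
      by (intro set_eqI) (auto simp: field_simps split: if_splits)
    then show ?thesis using 5 by (auto simp: bc_def)
  qed
qed

lemma FR_card: "finite (FR y) \<and> card (FR y) = fc y"
proof -
  consider "0 \<le> y \<and> y < 1/2" | "y = 1/2" | "1/2 < y \<and> y < 1" | "y = 1"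
    | "y < 0 \<or> y > 1" by linarith
  then show ?thesis
  proof cases
    case 1
    then have "FR y = {(4-y)/4}" unfolding FR_def ff_def
      by (intro set_eqI) (auto simp: field_simps split: if_splits)
    then show ?thesis using 1 by (simp add: fc_def)
  next
    case 2
    then have "FR y = {5/8, 7/8}" unfolding FR_def ff_def
      by (intro set_eqI) (auto simp: field_simps split: if_splits)
    then show ?thesis unfolding 2 by (simp add: fc_def)
  next
    case 3
    then have "FR y = {(3-y)/4, (y+2)/4, (4-y)/4}" unfolding FR_def ff_def
      by (intro set_eqI) (auto simp: field_simps split: if_splits)
    moreover have "(3-y)/4 \<noteq> (y+2)/4" "(3-y)/4 \<noteq> (4-y)/4" "(y+2)/4 \<noteq> (4-y)/4"
      using 3 by (auto simp: field_simps)
    ultimately show ?thesis using 3 by (simp add: fc_def)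
  next
    case 4
    then have "FR y = {3/4}" unfolding FR_def ff_def
      by (intro set_eqI) (auto simp: field_simps split: if_splits)
    then show ?thesis unfolding 4 by (simp add: fc_def)
  next
    case 5
    then have "FR y = {}" unfolding FR_def ff_def
      by (intro set_eqI) (auto simp: field_simps split: if_splits)
    then show ?thesis using 5 by (auto simp: fc_def)
  qed
qed

lemma TT_empty: "y \<le> 0 \<or> y > 1 \<Longrightarrow> TT y = {}"
  unfolding TT_def using gg_bounds ff_tail by force

lemma TT_split: "TT y = BB y \<union> (\<lambda>t. t/2) ` TT (2*y)"
proof
  show "TT y \<subseteq> BB y \<union> (\<lambda>t. t/2) ` TT (2*y)"
  proof
    fix t assume t: "t \<in> TT y"
    show "t \<in> BB y \<union> (\<lambda>t. t/2) ` TT (2*y)"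
    proof (cases "1/4 < t")
      case True
      then show ?thesis using t unfolding TT_def BB_def by (auto simp: ff_tail gg_base)
    next
      case False
      then have "2*t \<in> TT (2*y)" using t ff_half[of t] unfolding TT_def by auto
      then have "(2*t)/2 \<in> (\<lambda>t. t/2) ` TT (2*y)" by blast
      then show ?thesis by simp
    qed
  qed
next
  show "BB y \<union> (\<lambda>t. t/2) ` TT (2*y) \<subseteq> TT y"
  proof
    fix t assume t: "t \<in> BB y \<union> (\<lambda>t. t/2) ` TT (2*y)"
    then show "t \<in> TT y"
    proof
      assume "t \<in> BB y" then show ?thesis unfolding TT_def BB_def by (auto simp: ff_tail gg_base)
    next
      assume "t \<in> (\<lambda>t. t/2) ` TT (2*y)"
      then obtain u where u: "t = u/2" "0 < u" "u \<le> 1/2" "ff u = 2*y" unfolding TT_def by auto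
      have "ff (u/2) = gg u / 2" using u gg_half[of u] ff_tail[of "u/2"] by simp
      then show ?thesis using u ff_tail[of u] unfolding TT_def by auto
    qed
  qed
qed

lemma TT_card_n: "(1/2)^n < y \<Longrightarrow> finite (TT y) \<and> card (TT y) = tc y"
proof (induction n arbitrary: y)
  case 0
  then have "TT y = {}" using TT_empty by simp
  then show ?case using 0 by (simp add: tc_def)
next
  case (Suc n)
  show ?case
  proof (cases "y > 1")
    case True
    then have "TT y = {}" using TT_empty by simp
    then show ?thesis using True by (simp add: tc_def)
  next
    case False
    have "(1/2)^n < 2*y" using Suc.prems by simp
    then have IH: "finite (TT (2*y))" "card (TT (2*y)) = tc (2*y)" using Suc.IH by auto
    have "0 < (1/2::real)^(Suc n)" by simp
    then have y0: "0 < y" using Suc.prems by linarith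
    have fin1: "finite ((\<lambda>t. t/2) ` TT (2*y))" using IH by simp
    have c1: "card ((\<lambda>t. t/2) ` TT (2*y)) = tc (2*y)"
    proof -
      have "inj_on (\<lambda>t::real. t/2) (TT (2*y))" by (rule inj_onI) simp
      then show ?thesis using IH(2) by (simp add: card_image)
    qed
    have disj: "BB y \<inter> (\<lambda>t. t/2) ` TT (2*y) = {}" unfolding BB_def TT_def by auto
    note sp = TT_split[of y]
    have "card (TT y) = bc y + tc (2*y)"
      unfolding sp using BB_card[of y] fin1 c1 disj by (simp add: card_Un_disjoint)
    moreover have "bc y + tc (2*y) = tc y"
    proof -
      consider "1/2 < y" | "y = 1/2" | "1/4 < y \<and> y < 1/2" | "y = 1/4" | "y < 1/4" by linarith
      then show ?thesis
      proof cases
        case 1 then show ?thesis using False unfolding bc_def tc_def by simp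
      next
        case 2 then show ?thesis unfolding bc_def tc_def by simp
      next
        case 3 then show ?thesis unfolding bc_def tc_def by simp
      next
        case 4 then show ?thesis unfolding bc_def tc_def by simp
      next
        case 5 then show ?thesis using y0 unfolding bc_def tc_def by simp
      qed
    qed
    ultimately show ?thesis unfolding sp using BB_card[of y] fin1 by simp
  qed
qed

lemma TT_card: "finite (TT y) \<and> card (TT y) = tc y"
proof (cases "y \<le> 0")
  case True
  then show ?thesis using TT_empty by (simp add: tc_def)
next
  case False
  then obtain n where "(1/2::real)^n < y" using real_arch_pow_inv[of y "1/2"] by auto
  then show ?thesis by (rule TT_card_n)
qed

lemma fib_card: "finite {t\<in>{0..1}. ff t = y} \<and>
   card {t\<in>{0..1}. ff t = y} = (if y < 0 \<or> y > 1 then 0 else if y = 0 \<or> y = 1 then 2 else 4)"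
proof -
  define Z where "Z = (if y = 0 then {0::real} else {})"
  have eq: "{t\<in>{0..1}. ff t = y} = Z \<union> TT y \<union> FR y"
    unfolding Z_def TT_def FR_def by (auto simp: ff_def)
  have d1: "Z \<inter> TT y = {}" "(Z \<union> TT y) \<inter> FR y = {}" unfolding Z_def TT_def FR_def by auto
  have cZ: "finite Z" "card Z = (if y = 0 then 1 else 0)" unfolding Z_def by auto
  have "card {t\<in>{0..1}. ff t = y} = card Z + tc y + fc y"
    unfolding eq using d1 cZ TT_card[of y] FR_card[of y] by (simp add: card_Un_disjoint)
  moreover have "card Z + tc y + fc y = (if y < 0 \<or> y > 1 then 0 else if y = 0 \<or> y = 1 then 2 else 4)"
    unfolding cZ(2) tc_def fc_def by auto
  ultimately show ?thesis unfolding eq using cZ TT_card[of y] FR_card[of y] by simp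
qed


theorem mainTheorem7:
  shows "(\<not> (\<exists>p :: real poly. Omega (poly p) = {0, 2, 4}))
       \<and> (\<exists>f :: real \<Rightarrow> real. continuous_on {0..1} f \<and> Omega f = {0, 2, 4})"
proof
  show "\<not> (\<exists>p :: real poly. Omega (poly p) = {0, 2, 4})" by (rule no_poly)
  have fcv: "fibre_card ff y = enat (if y < 0 \<or> y > 1 then 0 else if y = 0 \<or> y = 1 then 2 else 4)" for y
    using fib_card[of y] unfolding fibre_card_def by simp
  have "Omega ff = {0, 2, 4}"
  proof
    show "Omega ff \<subseteq> {0, 2, 4}"
      unfolding Omega_def using fcv by (auto simp: zero_enat_def numeral_eq_enat)
    have "fibre_card ff 2 = 0" "fibre_card ff 0 = 2" "fibre_card ff (1/4) = 4"
      using fcv by (auto simp: zero_enat_def numeral_eq_enat)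
    then show "{0, 2, 4} \<subseteq> Omega ff" unfolding Omega_def by auto
  qed
  then show "\<exists>f :: real \<Rightarrow> real. continuous_on {0..1} f \<and> Omega f = {0, 2, 4}"
    using cont_ff by blast
qed

end
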